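(* Let $H$ be a Hilbert space, $K\subset H$ a compact set, $C\ge1$ and $n\in\mathbb N$. Then $$ e^{\rm cont}_{4n+1}(K,H)\le 2C\, e^{\rm non}_{n,C}(K,H). $$
   Context: A sequence $\mathcal B=\{h_1,h_2,\dots\}\subset H$ is a Riesz basis of $H$ if finite linear combinations are dense in $H$ and there are constants $0<A\le B$ with $A(\sum_k|\alpha_k|^2)^{1/2}\le\|\sum_k\alpha_kh_k\|_H\le B(\sum_k|\alpha_k|^2)^{1/2}$ for all finitely supported scalar sequences; $A,B$ denote the optimal such constants. For $C\ge1$, $\mathcal B_C$ is the set of Riesz bases of $H$ with $B/A\le C$. Best $n$-term approximation: $\sigma_n(u,\mathcal B)_H=\inf_{i_1,\dots,i_n}\inf_{c_1,\dots,c_n}\|u-\sum_{k=1}^nc_kh_{i_k}\|_H$. Define $e^{\rm non}_{n,C}(K,H)=\inf_{\mathcal B\in\mathcal B_C}\sup_{u\in K}\sigma_n(u,\mathcal B)_H$ and $e^{\rm cont}_n(K,H)=\inf_{N_n,\varphi_n}\sup_{u\in K}\|\varphi_n(N_n(u))-u\|_H$, where the infimum is over all continuous maps $N_n:K\to\mathbb R^n$ and $\varphi_n:\mathbb R^n\to H$. *)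

theory Defs
  imports "HOL-Analysis.Analysis"
begin

definition riesz_ratios :: "(nat \<Rightarrow> 'a::real_normed_vector) \<Rightarrow> real set" where
  "riesz_ratios h = {norm (\<Sum>k\<in>F. \<alpha> k *\<^sub>R h k) / sqrt (\<Sum>k\<in>F. (\<alpha> k)\<^sup>2) | F \<alpha>.
       finite F \<and> (\<exists>k\<in>F. \<alpha> k \<noteq> 0)}"

definition riesz_A :: "(nat \<Rightarrow> 'a::real_normed_vector) \<Rightarrow> real" where
  "riesz_A h = Inf (riesz_ratios h)"

definition riesz_B :: "(nat \<Rightarrow> 'a::real_normed_vector) \<Rightarrow> real" where
  "riesz_B h = Sup (riesz_ratios h)"

definition riesz_basis :: "(nat \<Rightarrow> 'a::real_normed_vector) \<Rightarrow> bool" where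
  "riesz_basis h \<longleftrightarrow> closure (span (range h)) = UNIV
      \<and> bdd_above (riesz_ratios h) \<and> riesz_A h > 0"

definition riesz_bases_C :: "real \<Rightarrow> (nat \<Rightarrow> 'a::real_normed_vector) set" where
  "riesz_bases_C C = {h. riesz_basis h \<and> riesz_B h / riesz_A h \<le> C}"

definition sigma_n :: "nat \<Rightarrow> 'a::real_normed_vector \<Rightarrow> (nat \<Rightarrow> 'a) \<Rightarrow> ennreal" where
  "sigma_n n u h = (INF i\<in>(UNIV :: (nat \<Rightarrow> nat) set). INF c\<in>(UNIV :: (nat \<Rightarrow> real) set).
       ennreal (norm (u - (\<Sum>k<n. c k *\<^sub>R h (i k)))))"

definition e_non :: "nat \<Rightarrow> real \<Rightarrow> 'a::real_normed_vector set \<Rightarrow> ennreal" where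
  "e_non n C K = (INF h\<in>riesz_bases_C C. SUP u\<in>K. sigma_n n u h)"

text \<open>R^n realised as the subspace of nat \<Rightarrow> real (product topology) of
  sequences vanishing from index n on.\<close>
definition Rn :: "nat \<Rightarrow> (nat \<Rightarrow> real) set" where
  "Rn n = {x. \<forall>k\<ge>n. x k = 0}"

definition e_cont :: "nat \<Rightarrow> 'a::real_normed_vector set \<Rightarrow> ennreal" where
  "e_cont n K = (INF p\<in>{(N, \<phi>). continuous_on K N \<and> N ` K \<subseteq> Rn n \<and> continuous_on (Rn n) \<phi>}.
       SUP u\<in>K. ennreal (norm ((snd p) ((fst p) u) - u)))"

end

theory Submission imports Defs "HOL-Computational_Algebra.Polynomial" begin


lemma cont_Max_fam:
  fixes f :: "'i \<Rightarrow> 'x::topological_space \<Rightarrow> real"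
  assumes "finite I" "I \<noteq> {}" "\<And>i. i \<in> I \<Longrightarrow> continuous_on S (f i)"
  shows "continuous_on S (\<lambda>x. Max ((\<lambda>i. f i x) ` I))"
  using assms
proof (induction I rule: finite_ne_induct)
  case (singleton i) then show ?case by simp
next
  case (insert i I)
  have "continuous_on S (\<lambda>x. max (f i x) (Max ((\<lambda>i. f i x) ` I)))"
    using insert by (intro continuous_on_max) auto
  then show ?case using insert by (simp add: Max_insert)
qed

lemma cont_Min_fam:
  fixes f :: "'i \<Rightarrow> 'x::topological_space \<Rightarrow> real"
  assumes "finite I" "I \<noteq> {}" "\<And>i. i \<in> I \<Longrightarrow> continuous_on S (f i)"
  shows "continuous_on S (\<lambda>x. Min ((\<lambda>i. f i x) ` I))"
  using assms
proof (induction I rule: finite_ne_induct)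
  case (singleton i) then show ?case by simp
next
  case (insert i I)
  have "continuous_on S (\<lambda>x. min (f i x) (Min ((\<lambda>i. f i x) ` I)))"
    using insert by (intro continuous_on_min) auto
  then show ?case using insert by (simp add: Min_insert)
qed

lemma span_repr:
  fixes h :: "nat \<Rightarrow> 'a::real_vector"
  assumes "x \<in> span (h ` I)" "finite I"
  shows "\<exists>\<beta>. x = (\<Sum>k\<in>I. \<beta> k *\<^sub>R h k)"
proof -
  let ?V = "{x. \<exists>\<beta>. x = (\<Sum>k\<in>I. \<beta> k *\<^sub>R h k)}"
  have "subspace ?V"
    unfolding subspace_def
  proof (intro conjI allI ballI impI)
    show "0 \<in> ?V" by (rule CollectI, rule exI[of _ "\<lambda>_. 0"]) simp
  next
    fix x y assume "x \<in> ?V" "y \<in> ?V"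
    then obtain a b where "x = (\<Sum>k\<in>I. a k *\<^sub>R h k)" "y = (\<Sum>k\<in>I. b k *\<^sub>R h k)" by auto
    then show "x + y \<in> ?V"
      by (intro CollectI exI[of _ "\<lambda>k. a k + b k"]) (simp add: scaleR_add_left sum.distrib)
  next
    fix c x assume "x \<in> ?V"
    then obtain a where "x = (\<Sum>k\<in>I. a k *\<^sub>R h k)" by auto
    then show "c *\<^sub>R x \<in> ?V"
      by (intro CollectI exI[of _ "\<lambda>k. c * a k"]) (simp add: scaleR_sum_right)
  qed
  moreover have "h ` I \<subseteq> ?V"
  proof
    fix y assume "y \<in> h ` I"
    then obtain j where j: "j \<in> I" "y = h j" by auto
    have "(\<Sum>k\<in>I. (if k = j then 1 else 0) *\<^sub>R h k) = h j"
    proof -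
      have "(\<Sum>k\<in>I. (if k = j then 1 else 0) *\<^sub>R h k) = (\<Sum>k\<in>I. if k = j then h k else 0)"
        by (rule sum.cong) auto
      also have "\<dots> = h j" using j assms(2) by simp
      finally show ?thesis .
    qed
    then show "y \<in> ?V" using j by (intro CollectI exI[of _ "\<lambda>k. if k = j then 1 else 0"]) simp
  qed
  ultimately have "span (h ` I) \<subseteq> ?V" by (rule span_minimal[rotated])
  then show ?thesis using assms(1) by auto
qed

lemma gram_schmidt:
  fixes S :: "'a::real_inner set"
  assumes "finite S"
  shows "\<exists>E. finite E \<and> (\<forall>e\<in>E. norm e = 1) \<and> (\<forall>e\<in>E. \<forall>e'\<in>E. e \<noteq> e' \<longrightarrow> e \<bullet> e' = 0) \<and> span E = span S"
  using assms
proof (induction S rule: finite_induct)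
  case empty then show ?case by (intro exI[of _ "{}"]) simp
next
  case (insert v S)
  then obtain E where E: "finite E" "\<forall>e\<in>E. norm e = 1" "\<forall>e\<in>E. \<forall>e'\<in>E. e \<noteq> e' \<longrightarrow> e \<bullet> e' = 0" "span E = span S"
    by blast
  define p where "p = (\<Sum>e\<in>E. (v \<bullet> e) *\<^sub>R e)"
  define w where "w = v - p"
  have sE: "p \<in> span E" unfolding p_def
    by (intro span_sum span_scale span_base)
  have orth: "w \<bullet> e = 0" if "e \<in> E" for e
  proof -
    have "p \<bullet> e = (\<Sum>e'\<in>E. (v \<bullet> e') * (e' \<bullet> e))"
      unfolding p_def by (simp add: inner_sum_left)
    also have "\<dots> = (\<Sum>e'\<in>E. if e' = e then v \<bullet> e else 0)"
    proof (rule sum.cong[OF refl])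
      fix e' assume e': "e' \<in> E"
      show "(v \<bullet> e') * (e' \<bullet> e) = (if e' = e then v \<bullet> e else 0)"
      proof (cases "e' = e")
        case True
        have "e \<bullet> e = 1" using E(2) that by (simp add: norm_eq_1)
        then show ?thesis using True by simp
      next
        case False
        then show ?thesis using E(3) e' that by simp
      qed
    qed
    also have "\<dots> = v \<bullet> e" using E(1) that by simp
    finally have "p \<bullet> e = v \<bullet> e" .
    then show ?thesis unfolding w_def by (simp add: inner_diff_left)
  qed
  show ?case
  proof (cases "w = 0")
    case True
    then have "v = p" unfolding w_def by simp
    then have "v \<in> span E" using sE by simp
    then have "v \<in> span S" using E(4) by simp
    then have "span (insert v S) = span S" by (rule span_redundant)
    then show ?thesis using E(1,2,3,4) by (intro exI[of _ E]) simp
  next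
    case False
    have nw: "norm w \<noteq> 0" using False by simp
    define u where "u = (1 / norm w) *\<^sub>R w"
    have nu: "norm u = 1" using nw unfolding u_def by simp
    have wu: "w = norm w *\<^sub>R u" using nw unfolding u_def by simp
    have ou: "u \<bullet> e = 0" if "e \<in> E" for e using orth[OF that] unfolding u_def by simp
    have uE: "u \<notin> E"
    proof
      assume "u \<in> E"
      then have "u \<bullet> u = 0" by (rule ou)
      then show False using nu by simp
    qed
    have s1: "span (insert u E) = span (insert w E)"
      unfolding span_eq
    proof (intro conjI)
      have "u \<in> span (insert w E)" unfolding u_def by (intro span_scale span_base) simp
      moreover have "E \<subseteq> span (insert w E)" by (meson span_superset subset_insertI order_trans)
      ultimately show "insert u E \<subseteq> span (insert w E)" by simp
      have "w \<in> span (insert u E)" by (subst wu, intro span_scale span_base) simp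
      moreover have "E \<subseteq> span (insert u E)" by (meson span_superset subset_insertI order_trans)
      ultimately show "insert w E \<subseteq> span (insert u E)" by simp
    qed
    have pE: "p \<in> span (insert a E)" for a using sE span_mono[of E "insert a E"] by blast
    have s2: "span (insert w E) = span (insert v E)"
      unfolding span_eq
    proof (intro conjI)
      have "w \<in> span (insert v E)" unfolding w_def
        by (intro span_diff pE) (simp add: span_base)
      moreover have "E \<subseteq> span (insert v E)" by (meson span_superset subset_insertI order_trans)
      ultimately show "insert w E \<subseteq> span (insert v E)" by simp
      have "v = w + p" unfolding w_def by simp
      then have "v \<in> span (insert w E)" by (metis span_add pE span_base insertI1)
      moreover have "E \<subseteq> span (insert w E)" by (meson span_superset subset_insertI order_trans)
      ultimately show "insert v E \<subseteq> span (insert w E)" by simp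
    qed
    have s3: "span (insert v E) = span (insert v S)"
      using E(4) by (simp add: span_insert)
    have o2: "\<forall>e\<in>insert u E. \<forall>e'\<in>insert u E. e \<noteq> e' \<longrightarrow> e \<bullet> e' = 0"
      using E(3) ou by (auto simp: inner_commute)
    show ?thesis
      using E(1,2) nu o2 s1 s2 s3
      by (intro exI[of _ "insert u E"]) simp
  qed
qed



lemma riesz_ineq:
  fixes h :: "nat \<Rightarrow> 'a::real_normed_vector"
  assumes "riesz_basis h" "finite F"
  shows "riesz_A h * sqrt (\<Sum>k\<in>F. (\<alpha> k)\<^sup>2) \<le> norm (\<Sum>k\<in>F. \<alpha> k *\<^sub>R h k)"
    and "norm (\<Sum>k\<in>F. \<alpha> k *\<^sub>R h k) \<le> riesz_B h * sqrt (\<Sum>k\<in>F. (\<alpha> k)\<^sup>2)"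
proof -
  have both: "riesz_A h * sqrt (\<Sum>k\<in>F. (\<alpha> k)\<^sup>2) \<le> norm (\<Sum>k\<in>F. \<alpha> k *\<^sub>R h k) \<and>
     norm (\<Sum>k\<in>F. \<alpha> k *\<^sub>R h k) \<le> riesz_B h * sqrt (\<Sum>k\<in>F. (\<alpha> k)\<^sup>2)"
  proof (cases "\<exists>k\<in>F. \<alpha> k \<noteq> 0")
    case True
    then obtain k where k: "k \<in> F" "\<alpha> k \<noteq> 0" by blast
    have "0 < (\<alpha> k)\<^sup>2" using k by simp
    also have "(\<alpha> k)\<^sup>2 \<le> (\<Sum>k\<in>F. (\<alpha> k)\<^sup>2)"
      using k assms(2) by (intro member_le_sum) auto
    finally have spos: "0 < sqrt (\<Sum>k\<in>F. (\<alpha> k)\<^sup>2)" by simp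
    define r where "r = norm (\<Sum>k\<in>F. \<alpha> k *\<^sub>R h k) / sqrt (\<Sum>k\<in>F. (\<alpha> k)\<^sup>2)"
    have rin: "r \<in> riesz_ratios h"
      unfolding riesz_ratios_def r_def using True assms(2) by blast
    have bb: "bdd_below (riesz_ratios h)"
      unfolding riesz_ratios_def by (rule bdd_belowI[of _ 0]) (auto intro!: divide_nonneg_nonneg sum_nonneg)
    have "riesz_A h \<le> r" unfolding riesz_A_def by (rule cInf_lower[OF rin bb])
    moreover have "r \<le> riesz_B h" unfolding riesz_B_def
      using assms(1) unfolding riesz_basis_def by (intro cSup_upper[OF rin]) auto
    ultimately show ?thesis using spos unfolding r_def
      by (simp add: pos_le_divide_eq pos_divide_le_eq)
  next
    case False
    then have "(\<Sum>k\<in>F. (\<alpha> k)\<^sup>2) = 0" "(\<Sum>k\<in>F. \<alpha> k *\<^sub>R h k) = 0" by auto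
    then show ?thesis by simp
  qed
  then show "riesz_A h * sqrt (\<Sum>k\<in>F. (\<alpha> k)\<^sup>2) \<le> norm (\<Sum>k\<in>F. \<alpha> k *\<^sub>R h k)"
    and "norm (\<Sum>k\<in>F. \<alpha> k *\<^sub>R h k) \<le> riesz_B h * sqrt (\<Sum>k\<in>F. (\<alpha> k)\<^sup>2)" by auto
qed



lemma vdm_zero:
  fixes z :: "nat \<Rightarrow> real"
  assumes S: "finite S" "card S \<le> m" and zS: "\<And>k. k \<notin> S \<Longrightarrow> z k = 0" and SI: "S \<subseteq> I" "finite I"
    and eq: "\<And>j. j < m \<Longrightarrow> (\<Sum>k\<in>I. z k * real k ^ j) = 0"
  shows "z k0 = 0"
proof (cases "k0 \<in> S")
  case False then show ?thesis using zS by simp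
next
  case True
  define p where "p = (\<Prod>k\<in>S-{k0}. [:- real k, 1:])"
  have "degree p \<le> (\<Sum>k\<in>S-{k0}. degree [:- real k, 1:])"
    unfolding p_def using degree_prod_sum_le[of "S-{k0}" "\<lambda>k. [:- real k, 1:]"] S(1) by (simp add: o_def)
  also have "\<dots> = card (S - {k0})" by simp
  also have "\<dots> < m" using True S by (metis card_Diff1_less order_less_le_trans)
  finally have dp: "degree p < m" .
  have "(\<Sum>k\<in>I. z k * poly p (real k)) = (\<Sum>k\<in>I. \<Sum>i\<le>degree p. coeff p i * (z k * real k ^ i))"
    by (simp add: poly_altdef sum_distrib_left mult_ac)
  also have "\<dots> = (\<Sum>i\<le>degree p. coeff p i * (\<Sum>k\<in>I. z k * real k ^ i))"
    by (subst sum.swap) (simp add: sum_distrib_left)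
  also have "\<dots> = 0" using dp eq by simp
  finally have s0: "(\<Sum>k\<in>I. z k * poly p (real k)) = 0" .
  have "(\<Sum>k\<in>I. z k * poly p (real k)) = (\<Sum>k\<in>I. if k = k0 then z k0 * poly p (real k0) else 0)"
  proof (rule sum.cong[OF refl])
    fix k assume "k \<in> I"
    show "z k * poly p (real k) = (if k = k0 then z k0 * poly p (real k0) else 0)"
    proof (cases "k = k0")
      case False
      show ?thesis
      proof (cases "k \<in> S")
        case True
        have "poly p (real k) = (\<Prod>k'\<in>S-{k0}. real k - real k')"
          unfolding p_def by (simp add: poly_prod)
        also have "\<dots> = 0" using True False S(1) by (intro prod_zero) auto
        finally show ?thesis using False by simp
      next
        case False
        then show ?thesis using zS \<open>k \<noteq> k0\<close> by simp
      qed
    qed simp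
  qed
  also have "\<dots> = z k0 * poly p (real k0)" using True SI by auto
  finally have "z k0 * poly p (real k0) = 0" using s0 by simp
  moreover have "poly p (real k0) \<noteq> 0"
  proof -
    have "poly p (real k0) = (\<Prod>k'\<in>S-{k0}. real k0 - real k')"
      unfolding p_def by (simp add: poly_prod)
    also have "\<dots> \<noteq> 0" using S(1) by (subst prod_zero_iff) auto
    finally show ?thesis .
  qed
  ultimately show ?thesis by simp
qed



definition clip :: "real \<Rightarrow> real \<Rightarrow> real" where "clip t a = max (- t) (min t a)"

lemma clip_sq: assumes "0 \<le> t" shows "(clip t a)\<^sup>2 \<le> t\<^sup>2" "(clip t a)\<^sup>2 \<le> a\<^sup>2"
proof -
  have "\<bar>clip t a\<bar> \<le> t" "\<bar>clip t a\<bar> \<le> \<bar>a\<bar>" using assms unfolding clip_def by auto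
  then show "(clip t a)\<^sup>2 \<le> t\<^sup>2" "(clip t a)\<^sup>2 \<le> a\<^sup>2"
    by (metis abs_ge_zero abs_le_square_iff abs_of_nonneg assms order_trans power2_abs)+
qed

lemma clip_diff: assumes "0 \<le> t" "a - clip t a \<noteq> 0" shows "t < \<bar>a\<bar>"
  using assms unfolding clip_def by (auto simp: max_def min_def split: if_splits)

lemma thresh_bound:
  fixes x :: "nat \<Rightarrow> real"
  assumes I: "finite I" and Ss: "Ss \<subseteq> I" "card Ss = 2*n+1" "\<And>k. k \<in> Ss \<Longrightarrow> t \<le> \<bar>x k\<bar>"
    and t: "0 \<le> t" and S0: "finite S0" "card S0 \<le> n"
  shows "(\<Sum>k\<in>I. (clip t (x k))\<^sup>2) \<le> 2 * (\<Sum>k\<in>I-S0. (x k)\<^sup>2)"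
proof -
  have "(\<Sum>k\<in>I. (clip t (x k))\<^sup>2) = (\<Sum>k\<in>I\<inter>S0. (clip t (x k))\<^sup>2) + (\<Sum>k\<in>I-S0. (clip t (x k))\<^sup>2)"
    using I by (metis sum.Int_Diff)
  also have "(\<Sum>k\<in>I\<inter>S0. (clip t (x k))\<^sup>2) \<le> (\<Sum>k\<in>I\<inter>S0. t\<^sup>2)"
    by (intro sum_mono clip_sq t)
  also have "\<dots> = real (card (I\<inter>S0)) * t\<^sup>2" by simp
  also have "\<dots> \<le> real n * t\<^sup>2"
  proof -
    have "card (I\<inter>S0) \<le> card S0" using S0 by (intro card_mono) auto
    then show ?thesis using S0 by (intro mult_right_mono) auto
  qed
  also have "(\<Sum>k\<in>I-S0. (clip t (x k))\<^sup>2) \<le> (\<Sum>k\<in>I-S0. (x k)\<^sup>2)"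
    by (intro sum_mono clip_sq t)
  finally have A: "(\<Sum>k\<in>I. (clip t (x k))\<^sup>2) \<le> real n * t\<^sup>2 + (\<Sum>k\<in>I-S0. (x k)\<^sup>2)" by simp
  have fSs: "finite Ss" using Ss I finite_subset by blast
  have "card Ss - card S0 \<le> card (Ss - S0)" using S0(1) by (rule diff_card_le_card_Diff)
  then have cd: "n + 1 \<le> card (Ss - S0)" using Ss S0 by simp
  have "real n * t\<^sup>2 \<le> real (card (Ss - S0)) * t\<^sup>2" using cd by (intro mult_right_mono) auto
  also have "\<dots> = (\<Sum>k\<in>Ss-S0. t\<^sup>2)" by simp
  also have "\<dots> \<le> (\<Sum>k\<in>Ss-S0. (x k)\<^sup>2)"
  proof (rule sum_mono)
    fix k assume "k \<in> Ss - S0"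
    then have "t \<le> \<bar>x k\<bar>" using Ss by auto
    then show "t\<^sup>2 \<le> (x k)\<^sup>2" using t by (metis abs_le_square_iff abs_of_nonneg)
  qed
  also have "\<dots> \<le> (\<Sum>k\<in>I-S0. (x k)\<^sup>2)"
    using Ss I by (intro sum_mono2) auto
  finally show ?thesis using A by simp
qed



lemma orth_sum:
  fixes E :: "'a::real_inner set"
  assumes E: "finite E" "\<forall>e\<in>E. norm e = 1" "\<forall>e\<in>E. \<forall>e'\<in>E. e \<noteq> e' \<longrightarrow> e \<bullet> e' = 0" and e: "e \<in> E"
  shows "(\<Sum>e'\<in>E. a e' *\<^sub>R e') \<bullet> e = a e"
proof -
  have "(\<Sum>e'\<in>E. a e' *\<^sub>R e') \<bullet> e = (\<Sum>e'\<in>E. a e' * (e' \<bullet> e))"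
    by (simp add: inner_sum_left)
  also have "\<dots> = (\<Sum>e'\<in>E. if e' = e then a e else 0)"
  proof (rule sum.cong[OF refl])
    fix e' assume e': "e' \<in> E"
    show "a e' * (e' \<bullet> e) = (if e' = e then a e else 0)"
    proof (cases "e' = e")
      case True
      have "e \<bullet> e = 1" using E(2) e by (simp add: norm_eq_1)
      then show ?thesis using True by simp
    next
      case False
      then show ?thesis using E(3) e' e by simp
    qed
  qed
  also have "\<dots> = a e" using E(1) e by simp
  finally show ?thesis .
qed

lemma proj_orth:
  fixes E :: "'a::real_inner set"
  assumes E: "finite E" "\<forall>e\<in>E. norm e = 1" "\<forall>e\<in>E. \<forall>e'\<in>E. e \<noteq> e' \<longrightarrow> e \<bullet> e' = 0" and v: "v \<in> span E"
  shows "(u - (\<Sum>e\<in>E. (u \<bullet> e) *\<^sub>R e)) \<bullet> v = 0"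
  using v
proof (induction rule: span_induct)
  case base
  show ?case unfolding subspace_def by (auto simp: inner_add_right)
next
  case (step x)
  have "(\<Sum>e\<in>E. (u \<bullet> e) *\<^sub>R e) \<bullet> x = u \<bullet> x"
    using orth_sum[OF E(1,2,3) step, of "\<lambda>e. u \<bullet> e"] by simp
  then show ?case by (simp add: inner_diff_left)
qed

lemma proj_pyth:
  fixes E :: "'a::real_inner set"
  assumes E: "finite E" "\<forall>e\<in>E. norm e = 1" "\<forall>e\<in>E. \<forall>e'\<in>E. e \<noteq> e' \<longrightarrow> e \<bullet> e' = 0" and v: "v \<in> span E"
  shows "(norm (u - v))\<^sup>2 = (norm (u - (\<Sum>e\<in>E. (u \<bullet> e) *\<^sub>R e)))\<^sup>2 + (norm ((\<Sum>e\<in>E. (u \<bullet> e) *\<^sub>R e) - v))\<^sup>2"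
proof -
  let ?P = "(\<Sum>e\<in>E. (u \<bullet> e) *\<^sub>R e)"
  have "?P \<in> span E" by (intro span_sum span_scale span_base)
  then have "?P - v \<in> span E" using v by (rule span_diff)
  then have "orthogonal (u - ?P) (?P - v)" unfolding orthogonal_def by (rule proj_orth[OF E])
  then have "(norm ((u - ?P) + (?P - v)))\<^sup>2 = (norm (u - ?P))\<^sup>2 + (norm (?P - v))\<^sup>2"
    by (rule norm_add_Pythagorean)
  then show ?thesis by simp
qed

lemma regroup:
  fixes h :: "nat \<Rightarrow> 'a::real_vector"
  assumes "\<And>k. k < n \<Longrightarrow> i k < M"
  shows "(\<Sum>k<n. c k *\<^sub>R h (i k)) = (\<Sum>j<M. (\<Sum>k<n. if i k = j then c k else 0) *\<^sub>R h j)"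
proof -
  have "(\<Sum>j<M. (\<Sum>k<n. if i k = j then c k else 0) *\<^sub>R h j)
      = (\<Sum>j<M. \<Sum>k<n. (if i k = j then c k *\<^sub>R h (i k) else 0))"
    by (intro sum.cong refl) (auto simp: scaleR_sum_left intro!: sum.cong)
  also have "\<dots> = (\<Sum>k<n. \<Sum>j<M. (if i k = j then c k *\<^sub>R h (i k) else 0))"
    by (rule sum.swap)
  also have "\<dots> = (\<Sum>k<n. c k *\<^sub>R h (i k))"
    using assms by (intro sum.cong refl) (simp add: sum.delta)
  finally show ?thesis by simp
qed

lemma regroup_supp:
  "(\<Sum>k<n. if i k = j then c k else (0::real)) \<noteq> 0 \<Longrightarrow> j \<in> i ` {..<n}"
proof (rule ccontr)
  assume a: "(\<Sum>k<n. if i k = j then c k else (0::real)) \<noteq> 0" "j \<notin> i ` {..<n}"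
  then have "\<And>k. k < n \<Longrightarrow> i k \<noteq> j" by auto
  then have "(\<Sum>k<n. if i k = j then c k else (0::real)) = 0" by (intro sum.neutral) auto
  then show False using a by simp
qed



lemma main_construction:
  fixes K :: "'a::real_inner set" and h :: "nat \<Rightarrow> 'a"
  assumes K: "compact K" and hb: "riesz_basis h" and BC: "riesz_B h \<le> C * riesz_A h" and C: "C \<ge> 1"
    and appr: "\<And>u. u \<in> K \<Longrightarrow> \<exists>i c. norm (u - (\<Sum>k<n. c k *\<^sub>R h (i k))) < \<delta>"
  shows "\<exists>N \<phi>. continuous_on K N \<and> N ` K \<subseteq> Rn (4*n+1) \<and> continuous_on (Rn (4*n+1)) \<phi>
             \<and> (\<forall>u\<in>K. norm (\<phi> (N u) - u) \<le> 2*C*\<delta>)"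
proof -
  have Apos: "riesz_A h > 0" using hb unfolding riesz_basis_def by simp
  obtain ii cc where icK: "\<And>u. u \<in> K \<Longrightarrow> norm (u - (\<Sum>k<n. cc u k *\<^sub>R h (ii u k))) < \<delta>"
    using appr by metis
  define gv where "gv u = (\<Sum>k<n. cc u k *\<^sub>R h (ii u k))" for u
  have cover: "K \<subseteq> (\<Union>u\<in>K. ball (gv u) \<delta>)"
  proof
    fix u assume "u \<in> K"
    then have "dist (gv u) u < \<delta>" using icK unfolding gv_def by (simp add: dist_norm norm_minus_commute)
    then show "u \<in> (\<Union>u\<in>K. ball (gv u) \<delta>)" using \<open>u \<in> K\<close> by auto
  qed
  obtain J where J: "J \<subseteq> K" "finite J" "K \<subseteq> (\<Union>u\<in>J. ball (gv u) \<delta>)"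
    using compactE_image[OF K _ cover] by blast
  define M where "M = 2*n+1 + Max (insert 0 ((\<lambda>(u,k). ii u k) ` (J \<times> {..<n}))) + 1"
  have iiM: "ii u k < M" if "u \<in> J" "k < n" for u k
  proof -
    have "ii u k \<le> Max (insert 0 ((\<lambda>(u,k). ii u k) ` (J \<times> {..<n})))"
      using J(2) that by (intro Max_ge) auto
    then show ?thesis unfolding M_def by simp
  qed
  have M2: "2*n+1 \<le> M" unfolding M_def by simp
  define d where "d u j = (\<Sum>k<n. if ii u k = j then cc u k else 0)" for u j
  have gvd: "gv u = (\<Sum>j<M. d u j *\<^sub>R h j)" if "u \<in> J" for u
    unfolding gv_def d_def using iiM[OF that] by (rule regroup)
  have dsupp: "d u j = 0" if "j \<notin> ii u ` {..<n}" for u j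
    using regroup_supp[where i="ii u" and c="cc u" and n=n and j=j] that unfolding d_def by blast
  have S0card: "card (ii u ` {..<n}) \<le> n" for u
    using card_image_le[of "{..<n}" "ii u"] by simp
  obtain E where E: "finite E" "\<forall>e\<in>E. norm e = 1" "\<forall>e\<in>E. \<forall>e'\<in>E. e \<noteq> e' \<longrightarrow> e \<bullet> e' = 0"
      "span E = span (h ` {..<M})"
    using gram_schmidt[of "h ` {..<M}"] by blast
  have "\<forall>e\<in>E. \<exists>\<beta>. e = (\<Sum>k<M. \<beta> k *\<^sub>R h k)"
  proof
    fix e assume "e \<in> E"
    then have "e \<in> span (h ` {..<M})" using E(4) span_base by blast
    then show "\<exists>\<beta>. e = (\<Sum>k<M. \<beta> k *\<^sub>R h k)" by (rule span_repr) simp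
  qed
  then obtain \<beta> where \<beta>: "\<And>e. e \<in> E \<Longrightarrow> e = (\<Sum>k<M. \<beta> e k *\<^sub>R h k)" by metis
  define c where "c u k = (if k < M then (\<Sum>e\<in>E. (u \<bullet> e) * \<beta> e k) else 0)" for u k
  define P where "P u = (\<Sum>e\<in>E. (u \<bullet> e) *\<^sub>R e)" for u
  have Pc: "P u = (\<Sum>k<M. c u k *\<^sub>R h k)" for u
  proof -
    have "P u = (\<Sum>e\<in>E. (u \<bullet> e) *\<^sub>R (\<Sum>k<M. \<beta> e k *\<^sub>R h k))"
      unfolding P_def using \<beta> by (intro sum.cong) auto
    also have "\<dots> = (\<Sum>e\<in>E. \<Sum>k<M. ((u \<bullet> e) * \<beta> e k) *\<^sub>R h k)"
      by (simp add: scaleR_sum_right)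
    also have "\<dots> = (\<Sum>k<M. \<Sum>e\<in>E. ((u \<bullet> e) * \<beta> e k) *\<^sub>R h k)"
      by (rule sum.swap)
    also have "\<dots> = (\<Sum>k<M. c u k *\<^sub>R h k)"
      unfolding c_def by (intro sum.cong) (auto simp: scaleR_sum_left)
    finally show ?thesis .
  qed
  have c0: "c u k = 0" if "k \<ge> M" for u k using that unfolding c_def by simp
  have inspan: "(\<Sum>k<M. a k *\<^sub>R h k) \<in> span E" for a
    unfolding E(4) by (intro span_sum span_scale span_base) auto
  have pyth: "(norm (u - v))\<^sup>2 = (norm (u - P u))\<^sup>2 + (norm (P u - v))\<^sup>2" if "v \<in> span E" for u v
    unfolding P_def by (rule proj_pyth[OF E(1,2,3) that])
  have contc: "continuous_on UNIV c"
  proof (rule continuous_on_coordinatewise_then_product)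
    fix k
    show "continuous_on UNIV (\<lambda>u. c u k)"
      unfolding c_def by (cases "k < M") (auto intro!: continuous_intros)
  qed
  define Fam where "Fam = {S. S \<subseteq> {..<M} \<and> card S = 2*n+1}"
  have Famfin: "finite Fam" unfolding Fam_def
    by (rule finite_subset[of _ "Pow {..<M}"]) auto
  have FamS: "{..<2*n+1} \<in> Fam" unfolding Fam_def using M2 by auto
  have Famne: "Fam \<noteq> {}" using FamS by auto
  have Famne2: "S \<noteq> {}" "finite S" if "S \<in> Fam" for S
    using that unfolding Fam_def by (auto intro: finite_subset)
  define \<tau> where "\<tau> x = Max ((\<lambda>S. Min ((\<lambda>k. \<bar>x k\<bar>) ` S)) ` Fam)" for x :: "nat \<Rightarrow> real"
  define T where "T x k = x k - clip (\<tau> x) (x k)" for x :: "nat \<Rightarrow> real" and k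
  have cont\<tau>: "continuous_on UNIV \<tau>"
    unfolding \<tau>_def
  proof (rule cont_Max_fam[OF Famfin Famne, of UNIV "\<lambda>S x. Min ((\<lambda>k. \<bar>x k\<bar>) ` S)"])
    fix S assume "S \<in> Fam"
    show "continuous_on UNIV (\<lambda>x::nat\<Rightarrow>real. Min ((\<lambda>k. \<bar>x k\<bar>) ` S))"
      by (rule cont_Min_fam[OF Famne2(2)[OF \<open>S \<in> Fam\<close>] Famne2(1)[OF \<open>S \<in> Fam\<close>]])
         (auto intro!: continuous_intros)
  qed
  have contT: "continuous_on UNIV T"
  proof (rule continuous_on_coordinatewise_then_product)
    fix k
    show "continuous_on UNIV (\<lambda>x. T x k)"
      unfolding T_def clip_def
      by (intro continuous_intros continuous_on_compose2[OF cont\<tau>]) auto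
  qed
  have \<tau>ge: "Min ((\<lambda>k. \<bar>x k\<bar>) ` S) \<le> \<tau> x" if "S \<in> Fam" for x S
    unfolding \<tau>_def using Famfin that by (intro Max_ge) auto
  have \<tau>attain: "\<exists>S\<in>Fam. \<forall>k\<in>S. \<tau> x \<le> \<bar>x k\<bar>" for x
  proof -
    have "\<tau> x \<in> (\<lambda>S. Min ((\<lambda>k. \<bar>x k\<bar>) ` S)) ` Fam"
      unfolding \<tau>_def using Famfin Famne by (intro Max_in) auto
    then obtain S where S: "S \<in> Fam" "\<tau> x = Min ((\<lambda>k. \<bar>x k\<bar>) ` S)" by auto
    have "\<forall>k\<in>S. \<tau> x \<le> \<bar>x k\<bar>" using S Famne2[OF S(1)] by auto
    then show ?thesis using S(1) by blast
  qed
  have \<tau>pos: "0 \<le> \<tau> x" for x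
  proof -
    obtain S where S: "S \<in> Fam" "\<forall>k\<in>S. \<tau> x \<le> \<bar>x k\<bar>" using \<tau>attain by blast
    have "0 \<le> Min ((\<lambda>k. \<bar>x k\<bar>) ` S)" using Famne2[OF S(1)] by simp
    then show ?thesis using \<tau>ge[OF S(1), of x] by linarith
  qed
  have Tsupp: "{k. T x k \<noteq> 0} \<subseteq> {k. k < M \<and> \<tau> x < \<bar>x k\<bar>}" if "\<And>k. k \<ge> M \<Longrightarrow> x k = 0" for x
  proof
    fix k assume "k \<in> {k. T x k \<noteq> 0}"
    then have "\<tau> x < \<bar>x k\<bar>" unfolding T_def by (intro clip_diff \<tau>pos) simp
    moreover have "k < M" using that \<open>\<tau> x < \<bar>x k\<bar>\<close> \<tau>pos[of x] by (metis abs_zero not_le not_less_iff_gr_or_eq)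
    ultimately show "k \<in> {k. k < M \<and> \<tau> x < \<bar>x k\<bar>}" by simp
  qed
  have Tcard: "card {k. T x k \<noteq> 0} \<le> 2*n" "finite {k. T x k \<noteq> 0}" "{k. T x k \<noteq> 0} \<subseteq> {..<M}"
    if "\<And>k. k \<ge> M \<Longrightarrow> x k = 0" for x
  proof -
    let ?G = "{k. k < M \<and> \<tau> x < \<bar>x k\<bar>}"
    have fG: "finite ?G" by simp
    have "card ?G \<le> 2*n"
    proof (rule ccontr)
      assume "\<not> card ?G \<le> 2*n"
      then have "2*n+1 \<le> card ?G" by simp
      then obtain S where S: "S \<subseteq> ?G" "card S = 2*n+1" using obtain_subset_with_card_n by metis
      then have SF: "S \<in> Fam" unfolding Fam_def by auto
      have "\<tau> x < Min ((\<lambda>k. \<bar>x k\<bar>) ` S)"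
        using S Famne2[OF SF] by (subst Min_gr_iff) auto
      then show False using \<tau>ge[OF SF, of x] by simp
    qed
    then show "card {k. T x k \<noteq> 0} \<le> 2*n" using card_mono[OF fG Tsupp[of x, OF that]] by simp
    show "finite {k. T x k \<noteq> 0}" using finite_subset[OF Tsupp[of x, OF that] fG] .
    show "{k. T x k \<noteq> 0} \<subseteq> {..<M}" using Tsupp[of x, OF that] by auto
  qed
  define L where "L y j = (if j < 4*n then (\<Sum>k<M. y k * real k ^ j) else 0)" for y :: "nat \<Rightarrow> real" and j
  have contL: "continuous_on UNIV L"
  proof (rule continuous_on_coordinatewise_then_product)
    fix j
    show "continuous_on UNIV (\<lambda>y. L y j)"
      unfolding L_def by (cases "j < 4*n") (auto intro!: continuous_intros)
  qed
  have LRn: "L y \<in> Rn (4*n+1)" for y unfolding L_def Rn_def by simp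
  define Q where "Q = T ` c ` K"
  have Qsupp: "card {k. y k \<noteq> 0} \<le> 2*n" "finite {k. y k \<noteq> 0}" "{k. y k \<noteq> 0} \<subseteq> {..<M}" if "y \<in> Q" for y
  proof -
    obtain u where "y = T (c u)" using \<open>y \<in> Q\<close> unfolding Q_def by auto
    then show "card {k. y k \<noteq> 0} \<le> 2*n" "finite {k. y k \<noteq> 0}" "{k. y k \<noteq> 0} \<subseteq> {..<M}"
      using Tcard[of "c u"] c0 by auto
  qed
  have injL: "inj_on L Q"
  proof (rule inj_onI)
    fix y1 y2 assume y: "y1 \<in> Q" "y2 \<in> Q" "L y1 = L y2"
    define S where "S = {k. y1 k \<noteq> 0} \<union> {k. y2 k \<noteq> 0}"
    have fS: "finite S" unfolding S_def using Qsupp y by auto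
    have cS: "card S \<le> 4*n"
    proof -
      have "card S \<le> card {k. y1 k \<noteq> 0} + card {k. y2 k \<noteq> 0}" unfolding S_def by (rule card_Un_le)
      then show ?thesis using Qsupp(1)[OF y(1)] Qsupp(1)[OF y(2)] by simp
    qed
    have SM: "S \<subseteq> {..<M}" unfolding S_def using Qsupp(3) y by blast
    have "(\<lambda>k. y1 k - y2 k) k0 = 0" for k0
    proof (rule vdm_zero[OF fS cS _ SM])
      show "\<And>k. k \<notin> S \<Longrightarrow> y1 k - y2 k = 0" unfolding S_def by auto
      show "finite {..<M}" by simp
      fix j assume "j < 4*n"
      then have "L y1 j = L y2 j" using y(3) by simp
      then have "(\<Sum>k<M. y1 k * real k ^ j) = (\<Sum>k<M. y2 k * real k ^ j)"
        unfolding L_def using \<open>j < 4*n\<close> by simp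
      then show "(\<Sum>k<M. (y1 k - y2 k) * real k ^ j) = 0"
        by (simp add: left_diff_distrib sum_subtractf)
    qed
    then show "y1 = y2" by auto
  qed
  have contTc: "continuous_on K (\<lambda>u. T (c u))"
    by (rule continuous_on_compose2[OF contT continuous_on_subset[OF contc]]) auto
  have Qcomp: "compact Q" unfolding Q_def image_comp
    using compact_continuous_image[OF contTc K] by (simp add: o_def)
  have LQcomp: "compact (L ` Q)"
    by (rule compact_continuous_image[OF continuous_on_subset[OF contL] Qcomp]) auto
  define g0 where "g0 = the_inv_into Q L"
  have g0L: "g0 (L y) = y" if "y \<in> Q" for y
    unfolding g0_def using injL that by (rule the_inv_into_f_f)
  have contg0: "continuous_on (L ` Q) g0"
    by (rule continuous_on_inv[OF continuous_on_subset[OF contL] Qcomp]) (auto simp: g0L)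
  define f where "f y = (\<Sum>k<M. g0 y k *\<^sub>R h k)" for y
  have contf: "continuous_on (L ` Q) f"
  proof -
    have "continuous_on (L ` Q) (\<lambda>y. g0 y k)" for k
      by (rule continuous_on_product_then_coordinatewise[OF contg0])
    then show ?thesis unfolding f_def
      by (intro continuous_on_sum continuous_on_scaleR continuous_on_const) auto
  qed
  have cl: "closedin (top_of_set UNIV) (L ` Q)"
    using compact_imp_closed[OF LQcomp] by simp
  obtain \<phi> where \<phi>: "continuous_on UNIV \<phi>" "\<And>y. y \<in> L ` Q \<Longrightarrow> \<phi> y = f y"
    using Tietze_unbounded[OF contf cl] by blast
  define N where "N u = L (T (c u))" for u
  have contN: "continuous_on K N"
    unfolding N_def by (rule continuous_on_compose2[OF contL contTc]) auto
  have NRn: "N ` K \<subseteq> Rn (4*n+1)" unfolding N_def using LRn by auto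
  have contphi: "continuous_on (Rn (4*n+1)) \<phi>" using \<phi>(1) by (rule continuous_on_subset) simp
  have phiN: "\<phi> (N u) = (\<Sum>k<M. T (c u) k *\<^sub>R h k)" if "u \<in> K" for u
  proof -
    have "T (c u) \<in> Q" unfolding Q_def using that by auto
    then have "\<phi> (N u) = f (L (T (c u)))" unfolding N_def by (intro \<phi>(2)) simp
    also have "\<dots> = (\<Sum>k<M. T (c u) k *\<^sub>R h k)" unfolding f_def using g0L[OF \<open>T (c u) \<in> Q\<close>] by simp
    finally show ?thesis .
  qed
  have Bnn: "0 \<le> riesz_B h"
  proof -
    have "0 \<le> norm (\<Sum>k\<in>{0}. (\<lambda>_. 1::real) k *\<^sub>R h k)" by simp
    also have "\<dots> \<le> riesz_B h * sqrt (\<Sum>k\<in>{0}. ((\<lambda>_. 1::real) k)\<^sup>2)"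
      using riesz_ineq(2)[OF hb, of "{0}" "\<lambda>_. 1"] by simp
    finally show ?thesis by simp
  qed
  have err: "norm (\<phi> (N u) - u) \<le> 2*C*\<delta>" if "u \<in> K" for u
  proof -
    obtain w where w: "w \<in> J" "norm (u - gv w) < \<delta>"
      using J(3) \<open>u \<in> K\<close> by (auto simp: dist_norm norm_minus_commute)
    have \<delta>0: "0 \<le> \<delta>" using w(2) norm_ge_zero[of "u - gv w"] by linarith
    define x where "x = c u"
    define a where "a = (\<Sum>k<M. T x k *\<^sub>R h k)"
    define S0 where "S0 = ii w ` {..<n}"
    have g: "gv w = (\<Sum>k<M. d w k *\<^sub>R h k)" using gvd[OF w(1)] .
    have P1: "(norm (u - a))\<^sup>2 = (norm (u - P u))\<^sup>2 + (norm (P u - a))\<^sup>2"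
      unfolding a_def by (rule pyth[OF inspan])
    have P2: "(norm (u - gv w))\<^sup>2 = (norm (u - P u))\<^sup>2 + (norm (P u - gv w))\<^sup>2"
      unfolding g by (rule pyth[OF inspan])
    have Pa: "P u - a = (\<Sum>k<M. clip (\<tau> x) (x k) *\<^sub>R h k)"
      unfolding Pc a_def x_def T_def by (simp add: sum_subtractf[symmetric] scaleR_diff_left)
    have Pg: "P u - gv w = (\<Sum>k<M. (x k - d w k) *\<^sub>R h k)"
      unfolding Pc g x_def by (simp add: sum_subtractf[symmetric] scaleR_diff_left)
    obtain Ss where Ss: "Ss \<in> Fam" "\<forall>k\<in>Ss. \<tau> x \<le> \<bar>x k\<bar>" using \<tau>attain by blast
    have thr: "(\<Sum>k<M. (clip (\<tau> x) (x k))\<^sup>2) \<le> 2 * (\<Sum>k\<in>{..<M}-S0. (x k)\<^sup>2)"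
    proof -
      have "Ss \<subseteq> {..<M}" "card Ss = 2*n+1" using Ss(1) unfolding Fam_def by auto
      note facts = this Ss(2) \<tau>pos[of x] S0card[of w]
      show ?thesis unfolding S0_def
        by (rule thresh_bound) (use facts in auto)
    qed
    also have "(\<Sum>k\<in>{..<M}-S0. (x k)\<^sup>2) = (\<Sum>k\<in>{..<M}-S0. (x k - d w k)\<^sup>2)"
      using dsupp unfolding S0_def by (intro sum.cong) auto
    also have "\<dots> \<le> (\<Sum>k<M. (x k - d w k)\<^sup>2)"
      by (intro sum_mono2) auto
    finally have thr2: "(\<Sum>k<M. (clip (\<tau> x) (x k))\<^sup>2) \<le> 2 * (\<Sum>k<M. (x k - d w k)\<^sup>2)" by simp
    have "norm (P u - a) \<le> riesz_B h * sqrt (\<Sum>k<M. (clip (\<tau> x) (x k))\<^sup>2)"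
      unfolding Pa by (rule riesz_ineq(2)[OF hb]) simp
    also have "\<dots> \<le> riesz_B h * sqrt (2 * (\<Sum>k<M. (x k - d w k)\<^sup>2))"
      using thr2 Bnn by (intro mult_left_mono real_sqrt_le_mono) auto
    also have "\<dots> = sqrt 2 * (riesz_B h * sqrt (\<Sum>k<M. (x k - d w k)\<^sup>2))"
      by (simp add: real_sqrt_mult)
    also have "\<dots> \<le> sqrt 2 * (C * (riesz_A h * sqrt (\<Sum>k<M. (x k - d w k)\<^sup>2)))"
      using BC by (intro mult_left_mono) (auto intro!: mult_right_mono sum_nonneg simp: mult.assoc[symmetric])
    also have "\<dots> \<le> sqrt 2 * (C * norm (P u - gv w))"
      unfolding Pg using C by (intro mult_left_mono riesz_ineq(1)[OF hb]) auto
    finally have PaPg: "norm (P u - a) \<le> sqrt 2 * C * norm (P u - gv w)" by (simp add: mult.assoc)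
    have "(norm (P u - a))\<^sup>2 \<le> (sqrt 2 * C * norm (P u - gv w))\<^sup>2"
      using PaPg by (intro power_mono) auto
    also have "\<dots> = 2 * C\<^sup>2 * (norm (P u - gv w))\<^sup>2" by (simp add: power_mult_distrib)
    finally have sq: "(norm (P u - a))\<^sup>2 \<le> 2 * C\<^sup>2 * (norm (P u - gv w))\<^sup>2" .
    have "1 \<le> C\<^sup>2" using C by (simp add: one_le_power)
    then have C2: "1 \<le> 2 * C\<^sup>2" by simp
    have X: "(norm (u - P u))\<^sup>2 \<le> 2 * C\<^sup>2 * (norm (u - P u))\<^sup>2"
      using mult_right_mono[OF C2 zero_le_power2[of "norm (u - P u)"]] by simp
    have D: "2 * C\<^sup>2 * ((norm (u - P u))\<^sup>2 + (norm (P u - gv w))\<^sup>2)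
        = 2 * C\<^sup>2 * (norm (u - P u))\<^sup>2 + 2 * C\<^sup>2 * (norm (P u - gv w))\<^sup>2"
      by (simp add: distrib_left)
    have s1: "(norm (u - a))\<^sup>2 \<le> 2 * C\<^sup>2 * (norm (u - gv w))\<^sup>2"
      unfolding P1 P2 D using sq X by linarith
    have nd: "(norm (u - gv w))\<^sup>2 \<le> \<delta>\<^sup>2"
      using w(2) by (intro power_mono) auto
    have s2: "2 * C\<^sup>2 * (norm (u - gv w))\<^sup>2 \<le> 2 * C\<^sup>2 * \<delta>\<^sup>2"
      using nd by (intro mult_left_mono) auto
    have e4: "(2 * C * \<delta>)\<^sup>2 = 4 * (C\<^sup>2 * \<delta>\<^sup>2)" by (simp add: power_mult_distrib)
    have e2: "2 * C\<^sup>2 * \<delta>\<^sup>2 = 2 * (C\<^sup>2 * \<delta>\<^sup>2)" by simp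
    have "0 \<le> C\<^sup>2 * \<delta>\<^sup>2" by simp
    then have sqi: "(norm (u - a))\<^sup>2 \<le> (2 * C * \<delta>)\<^sup>2" using s1 s2 e4 e2 by linarith
    have nn: "0 \<le> 2 * C * \<delta>" using C \<delta>0 by simp
    have na: "norm (u - a) \<le> 2 * C * \<delta>" using power2_le_imp_le[OF sqi nn] .
    have "\<phi> (N u) = a" using phiN[OF that] unfolding a_def x_def by simp
    then have "norm (\<phi> (N u) - u) = norm (u - a)" by (metis norm_minus_commute)
    then show ?thesis using na by simp
  qed
  show ?thesis using contN NRn contphi err by blast
qed

lemma key_bound:
  fixes K :: "'a::real_inner set" and h :: "nat \<Rightarrow> 'a"
  assumes K: "compact K" and C: "C \<ge> 1" and hC: "h \<in> riesz_bases_C C"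
    and lt: "(SUP u\<in>K. sigma_n n u h) < ennreal \<delta>"
  shows "e_cont (4*n+1) K \<le> ennreal (2*C*\<delta>)"
proof -
  have hb: "riesz_basis h" and rat: "riesz_B h / riesz_A h \<le> C"
    using hC unfolding riesz_bases_C_def by auto
  have Apos: "riesz_A h > 0" using hb unfolding riesz_basis_def by simp
  have BC: "riesz_B h \<le> C * riesz_A h" using rat Apos by (simp add: divide_le_eq)
  have appr: "\<exists>i c. norm (u - (\<Sum>k<n. c k *\<^sub>R h (i k))) < \<delta>" if "u \<in> K" for u
  proof -
    have "sigma_n n u h \<le> (SUP u\<in>K. sigma_n n u h)" using that by (rule SUP_upper)
    then have "sigma_n n u h < ennreal \<delta>" using lt by (rule le_less_trans)
    then obtain i where "(INF c\<in>(UNIV :: (nat \<Rightarrow> real) set). ennreal (norm (u - (\<Sum>k<n. c k *\<^sub>R h (i k))))) < ennreal \<delta>"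
      unfolding sigma_n_def by (auto simp: INF_less_iff)
    then obtain c where "ennreal (norm (u - (\<Sum>k<n. c k *\<^sub>R h (i k)))) < ennreal \<delta>"
      by (auto simp: INF_less_iff)
    then have "norm (u - (\<Sum>k<n. c k *\<^sub>R h (i k))) < \<delta>" by (simp add: ennreal_less_iff)
    then show ?thesis by blast
  qed
  obtain N \<phi> where N\<phi>: "continuous_on K N" "N ` K \<subseteq> Rn (4*n+1)" "continuous_on (Rn (4*n+1)) \<phi>"
      "\<forall>u\<in>K. norm (\<phi> (N u) - u) \<le> 2*C*\<delta>"
    using main_construction[OF K hb BC C appr] by blast
  have "e_cont (4*n+1) K \<le> (SUP u\<in>K. ennreal (norm ((snd (N, \<phi>)) ((fst (N, \<phi>)) u) - u)))"
    unfolding e_cont_def using N\<phi>(1,2,3) by (intro INF_lower) auto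
  also have "\<dots> \<le> ennreal (2*C*\<delta>)"
    using N\<phi>(4) by (intro SUP_least) (simp add: ennreal_leI)
  finally show ?thesis .
qed

theorem proposition1:
  fixes K :: "'a::{real_inner, complete_space} set" and C :: real and n :: nat
  assumes "compact K" and "C \<ge> 1"
  shows "e_cont (4 * n + 1) K \<le> ennreal (2 * C) * e_non n C K"
proof (cases "e_non n C K = top")
  case True
  have "ennreal (2 * C) \<noteq> 0" using assms(2) by simp
  then show ?thesis using True by (simp add: ennreal_mult_top)
next
  case False
  then obtain r where r: "e_non n C K = ennreal r" "0 \<le> r" by (cases "e_non n C K") auto
  have Cpos: "0 < C" using assms(2) by simp
  show ?thesis
  proof (rule ennreal_le_epsilon)
    fix e :: real assume e: "0 < e"
    define \<delta> where "\<delta> = r + e / (2*C)"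
    have "r < \<delta>" unfolding \<delta>_def using e Cpos by simp
    then have "e_non n C K < ennreal \<delta>" using r by (simp add: ennreal_less_iff)
    then obtain h where h: "h \<in> riesz_bases_C C" "(SUP u\<in>K. sigma_n n u h) < ennreal \<delta>"
      unfolding e_non_def by (auto simp: INF_less_iff)
    have "e_cont (4*n+1) K \<le> ennreal (2*C*\<delta>)"
      by (rule key_bound[OF assms(1,2) h])
    also have "2*C*\<delta> = 2*C*r + e" unfolding \<delta>_def using Cpos by (simp add: field_simps)
    also have "ennreal (2*C*r + e) = ennreal (2*C) * e_non n C K + ennreal e"
      using r Cpos e by (simp add: ennreal_mult)
    finally show "e_cont (4 * n + 1) K \<le> ennreal (2 * C) * e_non n C K + ennreal e" by simp
  qed
qed

end
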